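(* Consider the interior permanent magnet synchronous machine with state $x=(i_{s\alpha},i_{s\beta},\omega,\theta)^T$, input $v=(v_{s\alpha},v_{s\beta})^T$, output $y=(i_{s\alpha},i_{s\beta})^T$, given by $$\frac{d}{dt}\Big(L(\theta)\,i_{s\alpha\beta}+\psi_r\begin{bmatrix}\cos\theta\\ \sin\theta\end{bmatrix}\Big)=v-R_s\,i_{s\alpha\beta},\qquad\dot\omega=0,\qquad\dot\theta=\omega,$$ with $L(\theta)=\begin{bmatrix}L_0+L_2\cos2\theta & L_2\sin2\theta\\ L_2\sin2\theta & L_0-L_2\cos2\theta\end{bmatrix}$, $L_d=L_0+L_2>0$, $L_q=L_0-L_2>0$, $L_\Delta=L_d-L_q$, and constants $R_s$, $\psi_r$. Let $\mathcal{O}(x)$ be the $4\times4$ matrix whose rows are the gradients with respect to $x$ of $i_{s\alpha}$, $i_{s\beta}$, $\mathcal{L}_fi_{s\alpha}$, $\mathcal{L}_fi_{s\beta}$. With $i_{sd},i_{sq}$ defined by $\begin{bmatrix}i_{s\alpha}\\ i_{s\beta}\end{bmatrix}=\begin{bmatrix}\cos\theta&-\sin\theta\\ \sin\theta&\cos\theta\end{bmatrix}\begin{bmatrix}i_{sd}\\ i_{sq}\end{bmatrix}$ and $\frac{di_{sd}}{dt},\frac{di_{sq}}{dt}$ their time derivatives along the model, one has $$\det\mathcal{O}(x)=\frac{1}{L_dL_q}\Big[(L_\Delta i_{sd}+\psi_r)^2+L_\Delta^2i_{sq}^2\Big]\omega+\frac{L_\Delta}{L_dL_q}\Big[L_\Delta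 i_{sq}\frac{di_{sd}}{dt}-(L_\Delta i_{sd}+\psi_r)\frac{di_{sq}}{dt}\Big].$$ In particular, for the surface PMSM ($L_2=0$, $L_d=L_q=L_0$): $\det\mathcal{O}=\frac{\psi_r^2}{L_0^2}\omega$; and for the synchronous reluctance machine ($\psi_r=0$): $\det\mathcal{O}=\frac{L_\Delta^2}{L_dL_q}\big[(i_{sd}^2+i_{sq}^2)\omega+\frac{di_{sd}}{dt}i_{sq}-i_{sd}\frac{di_{sq}}{dt}\big]$.
   Context: The Lie derivative $\mathcal{L}_fh$ of an output component $h$ along $\dot x=f(x,u)$ is $\frac{\partial h}{\partial x}f(x,u)$; here $f$ is obtained by solving the flux equation for $\frac{d}{dt}i_{s\alpha\beta}$. *)

theory Defs
  imports "HOL-Analysis.Analysis"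
begin

text \<open>State x = (i_alpha, i_beta, omega, theta) :: real^4, components x$1 .. x$4.
  Input v = (v_alpha, v_beta) :: real^2. Parameters L0 L2 Rs psi.\<close>

definition Lmat :: "real \<Rightarrow> real \<Rightarrow> real \<Rightarrow> real^2^2" where
  "Lmat L0 L2 \<theta> = vector [vector [L0 + L2 * cos (2*\<theta>), L2 * sin (2*\<theta>)],
                             vector [L2 * sin (2*\<theta>), L0 - L2 * cos (2*\<theta>)]]"

definition iab :: "real^4 \<Rightarrow> real^2" where
  "iab x = vector [x$1, x$2]"

definition flux :: "real \<Rightarrow> real \<Rightarrow> real \<Rightarrow> real^4 \<Rightarrow> real^2" where
  "flux L0 L2 \<psi> x = Lmat L0 L2 (x$4) *v iab x + \<psi> *\<^sub>R vector [cos (x$4), sin (x$4)]"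

text \<open>d/dt i_alpha_beta obtained by solving the flux equation
  d/dt flux = v - Rs i, where d/dt flux = D flux(x) applied to xdot = (di, 0, omega).\<close>
definition di :: "real \<Rightarrow> real \<Rightarrow> real \<Rightarrow> real \<Rightarrow> real^4 \<Rightarrow> real^2 \<Rightarrow> real^2" where
  "di L0 L2 Rs \<psi> x v = (THE d. \<exists>D. (flux L0 L2 \<psi> has_derivative D) (at x) \<and>
        D (vector [d$1, d$2, 0, x$3]) = v - Rs *\<^sub>R iab x)"

definition fvec :: "real \<Rightarrow> real \<Rightarrow> real \<Rightarrow> real \<Rightarrow> real^4 \<Rightarrow> real^2 \<Rightarrow> real^4" where
  "fvec L0 L2 Rs \<psi> x v = vector [(di L0 L2 Rs \<psi> x v)$1, (di L0 L2 Rs \<psi> x v)$2, 0, x$3]"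

definition grad :: "(real^4 \<Rightarrow> real) \<Rightarrow> real^4 \<Rightarrow> real^4" where
  "grad h x = (THE g. (h has_derivative (\<lambda>y. g \<bullet> y)) (at x))"

definition lie :: "real \<Rightarrow> real \<Rightarrow> real \<Rightarrow> real \<Rightarrow> (real^4 \<Rightarrow> real) \<Rightarrow> real^2 \<Rightarrow> real^4 \<Rightarrow> real" where
  "lie L0 L2 Rs \<psi> h v x = grad h x \<bullet> fvec L0 L2 Rs \<psi> x v"

definition Obs :: "real \<Rightarrow> real \<Rightarrow> real \<Rightarrow> real \<Rightarrow> real^2 \<Rightarrow> real^4 \<Rightarrow> real^4^4" where
  "Obs L0 L2 Rs \<psi> v x = vector [grad (\<lambda>z. z$1) x, grad (\<lambda>z. z$2) x,
       grad (lie L0 L2 Rs \<psi> (\<lambda>z. z$1) v) x, grad (lie L0 L2 Rs \<psi> (\<lambda>z. z$2) v) x]"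

text \<open>dq currents: i_ab = rot(theta) i_dq.\<close>
definition isd :: "real^4 \<Rightarrow> real" where
  "isd x = cos (x$4) * x$1 + sin (x$4) * x$2"
definition isq :: "real^4 \<Rightarrow> real" where
  "isq x = - sin (x$4) * x$1 + cos (x$4) * x$2"

end

theory Submission
  imports Defs
begin

lemma vector_4 [simp]:
 "(vector [x,y,z,w] ::('a::zero)^4)$1 = x"
 "(vector [x,y,z,w] ::('a::zero)^4)$2 = y"
 "(vector [x,y,z,w] ::('a::zero)^4)$3 = z"
 "(vector [x,y,z,w] ::('a::zero)^4)$4 = w"
  unfolding vector_def by simp_all

lemma prod4: "prod f (UNIV::4 set) = f 1 * f 2 * f 3 * f 4"
  unfolding UNIV_4 by (simp add: ac_simps)

lemma lt4: "((i::4) < j) \<longleftrightarrow> (i=4 \<and> j\<noteq>4) \<or> (i=1 \<and> (j=2 \<or> j=3)) \<or> (i=2 \<and> j=3)"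
  using exhaust_4[of i] exhaust_4[of j]
  by (elim disjE) (simp_all add: less_bit0_def bit0.Rep_numeral bit0.Rep_1 bit0.Rep_0)

definition blk :: "real \<Rightarrow> real \<Rightarrow> real \<Rightarrow> real \<Rightarrow> real \<Rightarrow> real \<Rightarrow> real \<Rightarrow> real \<Rightarrow> real^4^4" where
  "blk a b c d p q r s = vector[vector[1,0,0,0], vector[0,1,0,0], vector[p,q,a,b], vector[r,s,c,d]]"

lemma rowop: assumes "i \<noteq> j" "B = (\<chi> k. if k = i then row i A + c *s row j A else row k A)" shows "det (B::real^4^4) = det A"
  unfolding assms(2) by (rule det_row_operation[OF assms(1)])

lemma blkA1: "det (blk a b 0 d 0 0 0 0) = a * d"
proof -
  have "det (blk a b 0 d 0 0 0 0) = prod (\<lambda>i. blk a b 0 d 0 0 0 0 $i$i) UNIV"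
  proof (rule det_lowerdiagonal)
    fix i j :: 4 assume "i < j"
    then show "blk a b 0 d 0 0 0 0 $ i $ j = 0"
      unfolding lt4 using exhaust_4[of j] by (auto simp: blk_def)
  qed
  then show ?thesis by (simp add: prod4 blk_def)
qed


lemma blkA2: assumes "a \<noteq> 0" shows "det (blk a b c d 0 0 0 0) = a * d - b * c"
proof -
  have "det (blk a b 0 (d - c*b/a) 0 0 0 0) = det (blk a b c d 0 0 0 0)"
    by (rule rowop[of 4 3 _ _ "-c/a"]) (use assms in \<open>auto simp: blk_def vec_eq_iff forall_4 row_def field_simps\<close>)
  with blkA1[of a b "d - c*b/a"] have "det (blk a b c d 0 0 0 0) = a * (d - c*b/a)" by simp
  also have "\<dots> = a * d - b * c" using assms by (simp add: field_simps)
  finally show ?thesis .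
qed

lemma blkA: "det (blk a b c d 0 0 0 0) = a * d - b * c"
proof (cases "a = 0")
  case False then show ?thesis by (rule blkA2)
next
  case True
  show ?thesis
  proof (cases "c = 0")
    case True
    then show ?thesis using blkA1 by simp
  next
    case False
    have "det (blk (a+c) (b+d) c d 0 0 0 0) = det (blk a b c d 0 0 0 0)"
      by (rule rowop[of 3 4 _ _ 1]) (auto simp: blk_def vec_eq_iff forall_4 row_def)
    then show ?thesis using blkA2[of "a+c" "b+d" c d] True False by (simp add: algebra_simps)
  qed
qed

lemma blk_det: "det (blk a b c d p q r s) = a * d - b * c"
proof -
  have 1: "det (blk a b c d p q 0 s) = det (blk a b c d p q r s)"
    by (rule rowop[of 4 1 _ _ "-r"]) (auto simp: blk_def vec_eq_iff forall_4 row_def)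
  have 2: "det (blk a b c d p q 0 0) = det (blk a b c d p q 0 s)"
    by (rule rowop[of 4 2 _ _ "-s"]) (auto simp: blk_def vec_eq_iff forall_4 row_def)
  have 3: "det (blk a b c d 0 q 0 0) = det (blk a b c d p q 0 0)"
    by (rule rowop[of 3 1 _ _ "-p"]) (auto simp: blk_def vec_eq_iff forall_4 row_def)
  have 4: "det (blk a b c d 0 0 0 0) = det (blk a b c d 0 q 0 0)"
    by (rule rowop[of 3 2 _ _ "-q"]) (auto simp: blk_def vec_eq_iff forall_4 row_def)
  show ?thesis using 1 2 3 4 blkA by simp
qed
lemma alg_poly:
  fixes La Lb Rs \<psi> va vb xa xb w sn cs :: real
  assumes sc: "sn^2 + cs^2 = 1"
  shows "let s2 = 2* sn*cs; c2 = cs^2 - sn^2; Dl = La^2 - Lb^2;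
    a1 = -2*Lb* s2*xa+2*Lb*c2*xb-\<psi>* sn; a2 = 2*Lb*c2*xa+2*Lb* s2*xb+\<psi>*cs;
    w1 = va-Rs*xa-w*a1; w2 = vb-Rs*xb-w*a2;
    ta1 = -4*Lb*c2*xa-4*Lb* s2*xb-\<psi>*cs; ta2 = -4*Lb* s2*xa+4*Lb*c2*xb-\<psi>* sn;
    N1 = (La-Lb*c2)*w1-Lb* s2*w2; N2 = -Lb* s2*w1+(La+Lb*c2)*w2;
    N31 = -(La-Lb*c2)*a1+Lb* s2*a2; N32 = Lb* s2*a1-(La+Lb*c2)*a2;
    N41 = 2*Lb* s2*w1+(La-Lb*c2)*(-w*ta1)-2*Lb*c2*w2-Lb* s2*(-w*ta2);
    N42 = -2*Lb*c2*w1-Lb* s2*(-w*ta1)-2*Lb* s2*w2+(La+Lb*c2)*(-w*ta2);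
    idd = cs*xa+sn*xb; iqq = -sn*xa+cs*xb
   in N31*N42 - N41*N32 = ((2*Lb*idd+\<psi>)^2 + (2*Lb)^2*iqq^2)*w*Dl
      + 2*Lb*(2*Lb*iqq*(cs*N1+sn*N2+w*iqq*Dl) - (2*Lb*idd+\<psi>)*(-sn*N1+cs*N2-w*idd*Dl))"
  unfolding Let_def using sc by algebra

lemma has_derivative_vec_nth' [derivative_intros]: "((\<lambda>z. z $ i) has_derivative (\<lambda>h. h $ i)) F"
  by (rule bounded_linear_imp_has_derivative) (rule bounded_linear_vec_nth)

lemma lin4: assumes "linear D" shows "D (y::real^4) = (\<chi> k. D (axis k 1)) \<bullet> y"
proof -
  have "D y = D (\<Sum>i\<in>UNIV. y$i *\<^sub>R axis i 1)"
    using basis_expansion[of y] by (simp add: scalar_mult_eq_scaleR)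
  also have "\<dots> = (\<Sum>i\<in>UNIV. y$i * D (axis i 1))"
    by (simp add: linear_sum[OF assms] linear_scale[OF assms])
  also have "\<dots> = (\<chi> k. D (axis k 1)) \<bullet> y"
    by (simp add: inner_vec_def mult.commute)
  finally show ?thesis .
qed

lemma grad_eqD:
  assumes "(h has_derivative D) (at x)"
  shows "grad h x = (\<chi> k. D (axis k 1))"
proof -
  have lin: "linear D" using assms has_derivative_linear by blast
  have D: "(\<lambda>y. (\<chi> k. D (axis k 1)) \<bullet> y) = D" by (rule ext, rule lin4[OF lin, symmetric])
  show ?thesis unfolding grad_def
  proof (rule the_equality)
    show "(h has_derivative (\<lambda>y. (\<chi> k. D (axis k 1)) \<bullet> y)) (at x)" unfolding D by (rule assms)
  next
    fix g assume "(h has_derivative (\<lambda>y. g \<bullet> y)) (at x)"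
    then have "(\<lambda>y. g \<bullet> y) = D" using assms by (rule has_derivative_unique)
    then show "g = (\<chi> k. D (axis k 1))"
      by (auto simp: vec_eq_iff inner_axis)
  qed
qed


lemma lin_solve1:
  fixes S C L0 L2 Dl p q :: real
  assumes "S^2 + C^2 = 1" "Dl = L0^2 - L2^2" "Dl \<noteq> 0"
  shows "(L0+L2*C)*(((L0-L2*C)*p - L2* S*q)/Dl) + L2* S*((-L2* S*p + (L0+L2*C)*q)/Dl) = p"
    "L2* S*(((L0-L2*C)*p - L2* S*q)/Dl) + (L0-L2*C)*((-L2* S*p + (L0+L2*C)*q)/Dl) = q"
proof -
  have "(L0+L2*C)*((L0-L2*C)*p - L2* S*q) + L2* S*(-L2* S*p + (L0+L2*C)*q) = Dl * p"
    using assms(1,2) by algebra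
  then show "(L0+L2*C)*(((L0-L2*C)*p - L2* S*q)/Dl) + L2* S*((-L2* S*p + (L0+L2*C)*q)/Dl) = p"
    using assms(3) by (simp add: field_simps)
  have "L2* S*((L0-L2*C)*p - L2* S*q) + (L0-L2*C)*(-L2* S*p + (L0+L2*C)*q) = Dl * q"
    using assms(1,2) by algebra
  then show "L2* S*(((L0-L2*C)*p - L2* S*q)/Dl) + (L0-L2*C)*((-L2* S*p + (L0+L2*C)*q)/Dl) = q"
    using assms(3) by (simp add: field_simps)
qed

lemma lin_solve2:
  fixes S C L0 L2 Dl p q a b :: real
  assumes "S^2 + C^2 = 1" "Dl = L0^2 - L2^2" "Dl \<noteq> 0"
    and "(L0+L2*C)*a + L2* S*b = p" "L2* S*a + (L0-L2*C)*b = q"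
  shows "a = ((L0-L2*C)*p - L2* S*q)/Dl" "b = (-L2* S*p + (L0+L2*C)*q)/Dl"
proof -
  have "Dl * a = (L0-L2*C)*p - L2* S*q" using assms(1,2,4,5) by algebra
  then show "a = ((L0-L2*C)*p - L2* S*q)/Dl" using assms(3) by (simp add: field_simps)
  have "Dl * b = -L2* S*p + (L0+L2*C)*q" using assms(1,2,4,5) by algebra
  then show "b = (-L2* S*p + (L0+L2*C)*q)/Dl" using assms(3) by (simp add: field_simps)
qed

lemma alg_final:
  fixes N1 N2 N31 N32 N41 N42 idd iqq w Dl L0 L2 \<psi> sn cs :: real
  assumes Dl0: "Dl \<noteq> 0" and DlE: "(L0+L2)*(L0-L2) = Dl"
    and H: "N31*N42 - N41*N32 = ((2*L2*idd+\<psi>)^2 + (2*L2)^2*iqq^2)*w*Dl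
      + 2*L2*(2*L2*iqq*(cs*N1+sn*N2+w*iqq*Dl) - (2*L2*idd+\<psi>)*(-sn*N1+cs*N2-w*idd*Dl))"
  shows "(N31/Dl)*(N42/Dl) - (N41/Dl)*(N32/Dl) = 1/((L0+L2)*(L0-L2)) * ((((L0+L2)-(L0-L2))*idd+\<psi>)^2 + ((L0+L2)-(L0-L2))^2*iqq^2)*w
     + ((L0+L2)-(L0-L2))/((L0+L2)*(L0-L2)) * (((L0+L2)-(L0-L2))*iqq*(cs*(N1/Dl)+sn*(N2/Dl)+w*iqq)
         - (((L0+L2)-(L0-L2))*idd+\<psi>)*(-sn*(N1/Dl)+cs*(N2/Dl)-w*idd))"
proof -
  have l: "(L0+L2)-(L0-L2) = 2*L2" by simp
  have "(N31/Dl)*(N42/Dl) - (N41/Dl)*(N32/Dl) = (N31*N42 - N41*N32)/Dl^2"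
    using Dl0 by (simp add: field_simps power2_eq_square)
  also have "\<dots> = 1/Dl * ((2*L2*idd+\<psi>)^2 + (2*L2)^2*iqq^2)*w
     + (2*L2)/Dl * ((2*L2)*iqq*(cs*(N1/Dl)+sn*(N2/Dl)+w*iqq)
         - ((2*L2)*idd+\<psi>)*(-sn*(N1/Dl)+cs*(N2/Dl)-w*idd))"
    unfolding H using Dl0 by (simp add: field_simps power2_eq_square)
  finally show ?thesis unfolding l DlE .
qed

lemma psi0_aux:
  fixes D LD idd iqq did diq w :: real
  shows "1 / D * ((LD * idd + 0)\<^sup>2 + LD\<^sup>2 * iqq\<^sup>2) * w + LD / D * (LD * iqq * did - (LD * idd + 0) * diq)
     = LD\<^sup>2 / D * ((idd\<^sup>2 + iqq\<^sup>2) * w + did * iqq - idd * diq)"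
  by (simp add: divide_inverse power2_eq_square algebra_simps)

lemma conj_lemma:
  fixes dO idd iqq did diq w L0 L2 \<psi> :: real
  assumes "L0+L2 > 0" "L0-L2 > 0"
    and M: "dO = 1 / ((L0+L2) * (L0-L2)) * ((((L0+L2)-(L0-L2)) * idd + \<psi>)\<^sup>2 + ((L0+L2)-(L0-L2))\<^sup>2 * iqq\<^sup>2) * w
                 + ((L0+L2)-(L0-L2)) / ((L0+L2) * (L0-L2)) * (((L0+L2)-(L0-L2)) * iqq * did - (((L0+L2)-(L0-L2)) * idd + \<psi>) * diq)"
  shows "dO = 1 / ((L0+L2) * (L0-L2)) * ((((L0+L2)-(L0-L2)) * idd + \<psi>)\<^sup>2 + ((L0+L2)-(L0-L2))\<^sup>2 * iqq\<^sup>2) * w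
                 + ((L0+L2)-(L0-L2)) / ((L0+L2) * (L0-L2)) * (((L0+L2)-(L0-L2)) * iqq * did - (((L0+L2)-(L0-L2)) * idd + \<psi>) * diq)
            \<and> (L2 = 0 \<longrightarrow> dO = \<psi>\<^sup>2 / L0\<^sup>2 * w)
            \<and> (\<psi> = 0 \<longrightarrow> dO = ((L0+L2)-(L0-L2))\<^sup>2 / ((L0+L2) * (L0-L2)) * ((idd\<^sup>2 + iqq\<^sup>2) * w + did * iqq - idd * diq))"
proof (intro conjI impI)
  show "dO = 1 / ((L0+L2) * (L0-L2)) * ((((L0+L2)-(L0-L2)) * idd + \<psi>)\<^sup>2 + ((L0+L2)-(L0-L2))\<^sup>2 * iqq\<^sup>2) * w
                 + ((L0+L2)-(L0-L2)) / ((L0+L2) * (L0-L2)) * (((L0+L2)-(L0-L2)) * iqq * did - (((L0+L2)-(L0-L2)) * idd + \<psi>) * diq)"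
    by (rule M)
next
  assume "L2 = 0" then show "dO = \<psi>\<^sup>2 / L0\<^sup>2 * w" using M by (simp add: power2_eq_square)
next
  have "(L0+L2)*(L0-L2) > 0" using assms(1,2) by (rule mult_pos_pos)
  then have nz: "L0*L0 - L2*L2 \<noteq> 0" "(L0+L2)*(L0-L2) \<noteq> 0" by (auto simp: algebra_simps)
  assume "\<psi> = 0" then show "dO = ((L0+L2)-(L0-L2))\<^sup>2 / ((L0+L2) * (L0-L2)) * ((idd\<^sup>2 + iqq\<^sup>2) * w + did * iqq - idd * diq)"
    using M psi0_aux[of "(L0+L2)*(L0-L2)" "(L0+L2)-(L0-L2)"] by simp
qed

context
  fixes L0 L2 Rs \<psi> :: real and v :: "real^2"
begin

definition a1 :: "real^4 \<Rightarrow> real" where "a1 z = -2*L2* sin(2*z$4)*z$1 + 2*L2*cos(2*z$4)*z$2 - \<psi>* sin(z$4)"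
definition a2 :: "real^4 \<Rightarrow> real" where "a2 z = 2*L2*cos(2*z$4)*z$1 + 2*L2* sin(2*z$4)*z$2 + \<psi>*cos(z$4)"
definition w1 :: "real^4 \<Rightarrow> real" where "w1 z = v$1 - Rs*z$1 - z$3*a1 z"
definition w2 :: "real^4 \<Rightarrow> real" where "w2 z = v$2 - Rs*z$2 - z$3*a2 z"
definition Dl :: real where "Dl = L0^2 - L2^2"
definition d1e :: "real^4 \<Rightarrow> real" where "d1e z = ((L0 - L2*cos(2*z$4))*w1 z - L2* sin(2*z$4)*w2 z)/Dl"
definition d2e :: "real^4 \<Rightarrow> real" where "d2e z = (-L2* sin(2*z$4)*w1 z + (L0 + L2*cos(2*z$4))*w2 z)/Dl"
definition F1 :: "real^4 \<Rightarrow> real" where "F1 z = (L0 + L2*cos(2*z$4))*z$1 + L2* sin(2*z$4)*z$2 + \<psi>*cos(z$4)"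
definition F2 :: "real^4 \<Rightarrow> real" where "F2 z = L2* sin(2*z$4)*z$1 + (L0 - L2*cos(2*z$4))*z$2 + \<psi>* sin(z$4)"
definition DF :: "real^4 \<Rightarrow> real^4 \<Rightarrow> real^2" where "DF z h = ((L0 + L2*cos(2*z$4))*h$1 + L2* sin(2*z$4)*h$2 + h$4 * a1 z) *\<^sub>R axis 1 1
   + (L2* sin(2*z$4)*h$1 + (L0 - L2*cos(2*z$4))*h$2 + h$4 * a2 z) *\<^sub>R (axis 2 1 :: real^2)"

lemma flux_eq: "flux L0 L2 \<psi> z = F1 z *\<^sub>R axis 1 1 + F2 z *\<^sub>R axis 2 1"
  by (simp add: vec_eq_iff forall_2 flux_def Lmat_def iab_def matrix_vector_mult_def sum_2 F1_def F2_def axis_def)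

lemma flux_der: "(flux L0 L2 \<psi> has_derivative DF z) (at z)"
  unfolding flux_eq[abs_def] DF_def F1_def F2_def a1_def a2_def
  by (rule has_derivative_eq_rhs, (rule derivative_intros)+)
     (auto simp: fun_eq_iff algebra_simps)


lemma di_eq:
  assumes Dl0: "Dl \<noteq> 0"
  shows "di L0 L2 Rs \<psi> z v = vector [d1e z, d2e z]"
proof -
  have sc: "(sin (2*z$4))^2 + (cos (2*z$4))^2 = 1" by simp
  have DFe: "DF z (vector [d$1, d$2, 0, z$3]) = v - Rs *\<^sub>R iab z \<longleftrightarrow>
     (L0 + L2*cos(2*z$4))*d$1 + L2* sin(2*z$4)*d$2 = w1 z \<and>
     L2* sin(2*z$4)*d$1 + (L0 - L2*cos(2*z$4))*d$2 = w2 z" for d :: "real^2"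
    by (auto simp: vec_eq_iff forall_2 DF_def iab_def w1_def w2_def axis_def algebra_simps)
  have ex: "DF z (vector [(vector [d1e z, d2e z] :: real^2) $ 1, (vector [d1e z, d2e z] :: real^2) $ 2, 0, z$3]) = v - Rs *\<^sub>R iab z"
    unfolding DFe unfolding vector_2 d1e_def d2e_def
    using lin_solve1[OF sc Dl_def Dl0] by simp
  show ?thesis unfolding di_def
  proof (rule the_equality)
    show "\<exists>D. (flux L0 L2 \<psi> has_derivative D) (at z) \<and>
       D (vector [(vector [d1e z, d2e z] :: real^2) $ 1, (vector [d1e z, d2e z] :: real^2) $ 2, 0, z $ 3]) = v - Rs *\<^sub>R iab z"
      using flux_der ex by blast
  next
    fix d :: "real^2"
    assume "\<exists>D. (flux L0 L2 \<psi> has_derivative D) (at z) \<and> D (vector [d$1, d$2, 0, z$3]) = v - Rs *\<^sub>R iab z"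
    then obtain D where D: "(flux L0 L2 \<psi> has_derivative D) (at z)" "D (vector [d$1, d$2, 0, z$3]) = v - Rs *\<^sub>R iab z"
      by blast
    have DD: "D = DF z" using D(1) flux_der by (rule has_derivative_unique)
    have e: "(L0 + L2*cos(2*z$4))*d$1 + L2* sin(2*z$4)*d$2 = w1 z"
       "L2* sin(2*z$4)*d$1 + (L0 - L2*cos(2*z$4))*d$2 = w2 z"
      using D(2) DFe[of d] DD by auto
    show "d = vector [d1e z, d2e z]"
      using lin_solve2[OF sc Dl_def Dl0 e]
      by (simp add: vec_eq_iff forall_2 d1e_def d2e_def)
  qed
qed


definition ta1 :: "real^4 \<Rightarrow> real" where "ta1 z = -4*L2*cos(2*z$4)*z$1 - 4*L2* sin(2*z$4)*z$2 - \<psi>*cos(z$4)"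
definition ta2 :: "real^4 \<Rightarrow> real" where "ta2 z = -4*L2* sin(2*z$4)*z$1 + 4*L2*cos(2*z$4)*z$2 - \<psi>* sin(z$4)"
definition P31 :: "real^4 \<Rightarrow> real" where "P31 z = (-(L0-L2*cos(2*z$4))*a1 z + L2* sin(2*z$4)*a2 z)/Dl"
definition P32 :: "real^4 \<Rightarrow> real" where "P32 z = (L2* sin(2*z$4)*a1 z - (L0+L2*cos(2*z$4))*a2 z)/Dl"
definition P41 :: "real^4 \<Rightarrow> real" where "P41 z = (2*L2* sin(2*z$4)*w1 z + (L0-L2*cos(2*z$4))*(-z$3*ta1 z) - 2*L2*cos(2*z$4)*w2 z - L2* sin(2*z$4)*(-z$3*ta2 z))/Dl"
definition P42 :: "real^4 \<Rightarrow> real" where "P42 z = (-2*L2*cos(2*z$4)*w1 z - L2* sin(2*z$4)*(-z$3*ta1 z) - 2*L2* sin(2*z$4)*w2 z + (L0+L2*cos(2*z$4))*(-z$3*ta2 z))/Dl"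

lemma d1e_der:
  assumes Dl0: "Dl \<noteq> 0"
  shows "\<exists>D. (d1e has_derivative D) (at z) \<and> D (axis 3 1) = P31 z \<and> D (axis 4 1) = P41 z"
  apply (rule exI, rule conjI)
   apply (unfold d1e_def w1_def w2_def a1_def a2_def)
   apply (rule derivative_intros)+
   apply (rule Dl0)
  apply (simp add: axis_def P31_def P41_def a1_def a2_def w1_def w2_def ta1_def ta2_def Dl0)
  apply (simp add: field_simps)
  done


lemma d2e_der:
  assumes Dl0: "Dl \<noteq> 0"
  shows "\<exists>D. (d2e has_derivative D) (at z) \<and> D (axis 3 1) = P32 z \<and> D (axis 4 1) = P42 z"
  apply (rule exI, rule conjI)
   apply (unfold d2e_def w1_def w2_def a1_def a2_def)
   apply (rule derivative_intros)+
   apply (rule Dl0)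
  apply (simp add: axis_def P32_def P42_def a1_def a2_def w1_def w2_def ta1_def ta2_def Dl0)
  apply (simp add: field_simps)
  done

lemma fvec_eq: "Dl \<noteq> 0 \<Longrightarrow> fvec L0 L2 Rs \<psi> z v = vector [d1e z, d2e z, 0, z$3]"
  by (simp add: fvec_def di_eq)

lemma grad_x1: "grad (\<lambda>z. z$1) z = (axis 1 1 :: real^4)"
  by (subst grad_eqD[OF has_derivative_vec_nth']) (simp add: vec_eq_iff axis_def)

lemma grad_x2: "grad (\<lambda>z. z$2) z = (axis 2 1 :: real^4)"
  by (subst grad_eqD[OF has_derivative_vec_nth']) (simp add: vec_eq_iff axis_def)

lemma lie_x1: "Dl \<noteq> 0 \<Longrightarrow> lie L0 L2 Rs \<psi> (\<lambda>z. z$1) v = d1e"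
  by (rule ext) (simp add: lie_def grad_x1 fvec_eq inner_axis')

lemma lie_x2: "Dl \<noteq> 0 \<Longrightarrow> lie L0 L2 Rs \<psi> (\<lambda>z. z$2) v = d2e"
  by (rule ext) (simp add: lie_def grad_x2 fvec_eq inner_axis')

lemma isd_der: "(isd has_derivative (\<lambda>h. cos (z$4) * h$1 + sin (z$4) * h$2 + h$4 * (- sin (z$4) * z$1 + cos (z$4) * z$2))) (at z)"
  unfolding isd_def[abs_def]
  by (rule has_derivative_eq_rhs, (rule derivative_intros)+) (auto simp: fun_eq_iff algebra_simps)

lemma isq_der: "(isq has_derivative (\<lambda>h. - sin (z$4) * h$1 + cos (z$4) * h$2 + h$4 * (- cos (z$4) * z$1 - sin (z$4) * z$2))) (at z)"
  unfolding isq_def[abs_def]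
  by (rule has_derivative_eq_rhs, (rule derivative_intros)+) (auto simp: fun_eq_iff algebra_simps)

lemma lie_isd: "Dl \<noteq> 0 \<Longrightarrow> lie L0 L2 Rs \<psi> isd v z = cos (z$4) * d1e z + sin (z$4) * d2e z + z$3 * isq z"
  by (simp add: lie_def grad_eqD[OF isd_der] fvec_eq inner_vec_def sum_4 axis_def isq_def algebra_simps)

lemma lie_isq: "Dl \<noteq> 0 \<Longrightarrow> lie L0 L2 Rs \<psi> isq v z = - sin (z$4) * d1e z + cos (z$4) * d2e z - z$3 * isd z"
  by (simp add: lie_def grad_eqD[OF isq_der] fvec_eq inner_vec_def sum_4 axis_def isd_def algebra_simps)

lemma det_Obs: "Dl \<noteq> 0 \<Longrightarrow> det (Obs L0 L2 Rs \<psi> v x) = P31 x * P42 x - P41 x * P32 x"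
proof -
  assume Dl0: "Dl \<noteq> 0"
  obtain D1 where D1: "(d1e has_derivative D1) (at x)" "D1 (axis 3 1) = P31 x" "D1 (axis 4 1) = P41 x"
    using d1e_der[OF Dl0] by blast
  obtain D2 where D2: "(d2e has_derivative D2) (at x)" "D2 (axis 3 1) = P32 x" "D2 (axis 4 1) = P42 x"
    using d2e_der[OF Dl0] by blast
  have "Obs L0 L2 Rs \<psi> v x = blk (P31 x) (P41 x) (P32 x) (P42 x) (D1 (axis 1 1)) (D1 (axis 2 1)) (D2 (axis 1 1)) (D2 (axis 2 1))"
    unfolding Obs_def lie_x1[OF Dl0] lie_x2[OF Dl0] grad_x1 grad_x2 grad_eqD[OF D1(1)] grad_eqD[OF D2(1)]
    using D1(2,3) D2(2,3) by (simp add: vec_eq_iff forall_4 blk_def axis_def)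
  then show ?thesis by (simp add: blk_det)
qed


lemma main_ctx:
  assumes pos: "L0 + L2 > 0" "L0 - L2 > 0"
  shows "let Ld = L0 + L2; Lq = L0 - L2; L\<Delta> = Ld - Lq;
             \<omega> = x$3; id = isd x; iq = isq x;
             did = lie L0 L2 Rs \<psi> isd v x; diq = lie L0 L2 Rs \<psi> isq v x;
             dO = det (Obs L0 L2 Rs \<psi> v x)
         in dO = 1 / (Ld * Lq) * ((L\<Delta> * id + \<psi>)\<^sup>2 + L\<Delta>\<^sup>2 * iq\<^sup>2) * \<omega>
                 + L\<Delta> / (Ld * Lq) * (L\<Delta> * iq * did - (L\<Delta> * id + \<psi>) * diq)
            \<and> (L2 = 0 \<longrightarrow> dO = \<psi>\<^sup>2 / L0\<^sup>2 * \<omega>)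
            \<and> (\<psi> = 0 \<longrightarrow> dO = L\<Delta>\<^sup>2 / (Ld * Lq) * ((id\<^sup>2 + iq\<^sup>2) * \<omega> + did * iq - id * diq))"
proof -
  have DlE: "(L0+L2)*(L0-L2) = Dl" unfolding Dl_def by (simp add: power2_eq_square algebra_simps)
  have "(L0+L2)*(L0-L2) > 0" using pos by (rule mult_pos_pos)
  then have Dl0: "Dl \<noteq> 0" using DlE by auto
  define A1 where "A1 = -2*L2*(2* sin(x$4)*cos(x$4))*x$1+2*L2*((cos(x$4))^2 - (sin(x$4))^2)*x$2-\<psi>* sin(x$4)"
  define A2 where "A2 = 2*L2*((cos(x$4))^2 - (sin(x$4))^2)*x$1+2*L2*(2* sin(x$4)*cos(x$4))*x$2+\<psi>*cos(x$4)"
  define W1 where "W1 = v$1-Rs*x$1-x$3*A1"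
  define W2 where "W2 = v$2-Rs*x$2-x$3*A2"
  define TA1 where "TA1 = -4*L2*((cos(x$4))^2 - (sin(x$4))^2)*x$1-4*L2*(2* sin(x$4)*cos(x$4))*x$2-\<psi>*cos(x$4)"
  define TA2 where "TA2 = -4*L2*(2* sin(x$4)*cos(x$4))*x$1+4*L2*((cos(x$4))^2 - (sin(x$4))^2)*x$2-\<psi>* sin(x$4)"
  define N1 where "N1 = (L0-L2*((cos(x$4))^2 - (sin(x$4))^2))*W1-L2*(2* sin(x$4)*cos(x$4))*W2"
  define N2 where "N2 = -L2*(2* sin(x$4)*cos(x$4))*W1+(L0+L2*((cos(x$4))^2 - (sin(x$4))^2))*W2"
  define N31 where "N31 = -(L0-L2*((cos(x$4))^2 - (sin(x$4))^2))*A1+L2*(2* sin(x$4)*cos(x$4))*A2"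
  define N32 where "N32 = L2*(2* sin(x$4)*cos(x$4))*A1-(L0+L2*((cos(x$4))^2 - (sin(x$4))^2))*A2"
  define N41 where "N41 = 2*L2*(2* sin(x$4)*cos(x$4))*W1+(L0-L2*((cos(x$4))^2 - (sin(x$4))^2))*(-x$3*TA1)-2*L2*((cos(x$4))^2 - (sin(x$4))^2)*W2-L2*(2* sin(x$4)*cos(x$4))*(-x$3*TA2)"
  define N42 where "N42 = -2*L2*((cos(x$4))^2 - (sin(x$4))^2)*W1-L2*(2* sin(x$4)*cos(x$4))*(-x$3*TA1)-2*L2*(2* sin(x$4)*cos(x$4))*W2+(L0+L2*((cos(x$4))^2 - (sin(x$4))^2))*(-x$3*TA2)"
  have sc: "(sin(x$4))^2 + (cos(x$4))^2 = 1" by simp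
  have H: "N31*N42 - N41*N32 = ((2*L2*isd x+\<psi>)^2 + (2*L2)^2*(isq x)^2)*x$3*Dl
      + 2*L2*(2*L2*isq x*(cos(x$4)*N1+sin(x$4)*N2+x$3*isq x*Dl) - (2*L2*isd x+\<psi>)*(-sin(x$4)*N1+cos(x$4)*N2-x$3*isd x*Dl))"
    using alg_poly[OF sc, where La=L0 and Lb=L2 and Rs=Rs and \<psi>=\<psi> and va="v$1" and vb="v$2" and xa="x$1" and xb="x$2" and w="x$3"]
    unfolding Let_def N1_def N2_def N31_def N32_def N41_def N42_def W1_def W2_def A1_def A2_def TA1_def TA2_def
      isd_def isq_def Dl_def by simp
  have trig: "sin (2*x$4) = 2* sin(x$4)*cos(x$4)" "cos (2*x$4) = (cos(x$4))^2 - (sin(x$4))^2"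
    by (simp_all add: sin_double cos_double)
  have eA: "a1 x = A1" "a2 x = A2" "w1 x = W1" "w2 x = W2" "ta1 x = TA1" "ta2 x = TA2"
    by (simp_all add: a1_def a2_def A1_def A2_def w1_def w2_def W1_def W2_def ta1_def ta2_def TA1_def TA2_def trig)
  have eP: "P31 x = N31/Dl" "P32 x = N32/Dl" "P41 x = N41/Dl" "P42 x = N42/Dl" "d1e x = N1/Dl" "d2e x = N2/Dl"
    by (simp_all add: P31_def P32_def P41_def P42_def d1e_def d2e_def N31_def N32_def N41_def N42_def N1_def N2_def eA trig)
  show ?thesis
    unfolding Let_def
    apply (rule conj_lemma[OF pos])
    unfolding det_Obs[OF Dl0] lie_isd[OF Dl0] lie_isq[OF Dl0] eP
    by (rule alg_final[OF Dl0 DlE H])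
qed

end

theorem mainTheorem4:
  fixes L0 L2 Rs \<psi> :: real and x :: "real^4" and v :: "real^2"
  assumes "L0 + L2 > 0" and "L0 - L2 > 0"
  shows "let Ld = L0 + L2; Lq = L0 - L2; L\<Delta> = Ld - Lq;
             \<omega> = x$3; id = isd x; iq = isq x;
             did = lie L0 L2 Rs \<psi> isd v x; diq = lie L0 L2 Rs \<psi> isq v x;
             dO = det (Obs L0 L2 Rs \<psi> v x)
         in dO = 1 / (Ld * Lq) * ((L\<Delta> * id + \<psi>)\<^sup>2 + L\<Delta>\<^sup>2 * iq\<^sup>2) * \<omega>
                 + L\<Delta> / (Ld * Lq) * (L\<Delta> * iq * did - (L\<Delta> * id + \<psi>) * diq)
            \<and> (L2 = 0 \<longrightarrow> dO = \<psi>\<^sup>2 / L0\<^sup>2 * \<omega>)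
            \<and> (\<psi> = 0 \<longrightarrow> dO = L\<Delta>\<^sup>2 / (Ld * Lq) * ((id\<^sup>2 + iq\<^sup>2) * \<omega> + did * iq - id * diq))"
  by (rule main_ctx[OF assms])

end
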